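(* Let $\mathcal F$ be a family of nonempty subsets of $[r]$ whose building closure $\widehat{\mathcal F}$ contains $[r]$. Then the normal fan of $\Delta_{\widehat{\mathcal F}}$ is a simplicial fan refining the normal fan of $\Delta_{\mathcal F}$ (every cone of the former is contained in a cone of the latter, and both fans have support $\mathbb R^r$); i.e. it is a triangulation of the normal fan of $\Delta_{\mathcal F}$.
   Context: For $F\subseteq[r]$ nonempty, $\Delta_F=\operatorname{conv}\{e_i:i\in F\}\subseteq\mathbb R^r$, and for a family $\mathcal F$, $\Delta_{\mathcal F}=\sum_{F\in\mathcal F}\Delta_F$ (Minkowski sum). The building closure $\widehat{\mathcal F}$ is the smallest family of subsets of $[r]$ containing $\mathcal F$ and all singletons such that $F\cup F'\in\widehat{\mathcal F}$ whenever $F,F'\in\widehat{\mathcal F}$ and $F\cap F'\ne\emptyset$. Normal fans are considered modulo the common lineality line $\mathbb R(1,\dots,1)$. *)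

theory Defs
  imports "HOL-Analysis.Analysis"
begin

text \<open>Ground set [r] is the finite index type 'n; R^r is real^'n.\<close>

definition simplexF :: "'n::finite set \<Rightarrow> (real^'n) set" where
  "simplexF F = convex hull ((\<lambda>i. axis i 1) ` F)"

definition minkowski_family :: "'n::finite set set \<Rightarrow> (real^'n) set" where
  "minkowski_family \<F> =
     {\<Sum>F\<in>\<F>. x F | x. \<forall>F\<in>\<F>. x F \<in> simplexF F}"

inductive_set building_closure :: "'n set set \<Rightarrow> 'n set set" for \<F> where
  base: "F \<in> \<F> \<Longrightarrow> F \<in> building_closure \<F>"
| singleton: "{i} \<in> building_closure \<F>"
| union: "F \<in> building_closure \<F> \<Longrightarrow> G \<in> building_closure \<F> \<Longrightarrow>
           F \<inter> G \<noteq> {} \<Longrightarrow> F \<union> G \<in> building_closure \<F>"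

definition normal_cone :: "(real^'n) set \<Rightarrow> (real^'n) set \<Rightarrow> (real^'n) set" where
  "normal_cone P S = {c. \<forall>x\<in>S. \<forall>y\<in>P. c \<bullet> y \<le> c \<bullet> x}"

definition normal_fan :: "(real^'n) set \<Rightarrow> (real^'n) set set" where
  "normal_fan P = {normal_cone P S | S. S face_of P \<and> S \<noteq> {}}"

definition ones :: "real^'n" where
  "ones = (\<chi> i. 1)"

text \<open>A cone is simplicial modulo the lineality line R*ones: it is generated
  (nonnegatively) by vectors V which, together with ones, are linearly independent,
  plus the line R*ones.\<close>
definition simplicial_mod_ones :: "(real^'n::finite) set \<Rightarrow> bool" where
  "simplicial_mod_ones C \<longleftrightarrow>
     (\<exists>V. finite V \<and> ones \<notin> V \<and> independent (insert ones V) \<and>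
          C = {(\<Sum>v\<in>V. a v *\<^sub>R v) + t *\<^sub>R ones | a t. \<forall>v\<in>V. a v \<ge> 0})"

definition is_fan :: "(real^'n::finite) set set \<Rightarrow> bool" where
  "is_fan \<Sigma> \<longleftrightarrow>
     (\<forall>C\<in>\<Sigma>. convex C \<and> cone C \<and> closed C) \<and>
     (\<forall>C\<in>\<Sigma>. \<forall>D. D face_of C \<and> D \<noteq> {} \<longrightarrow> D \<in> \<Sigma>) \<and>
     (\<forall>C\<in>\<Sigma>. \<forall>D\<in>\<Sigma>. (C \<inter> D) face_of C \<and> (C \<inter> D) face_of D)"

definition simplicial_fan :: "(real^'n::finite) set set \<Rightarrow> bool" where
  "simplicial_fan \<Sigma> \<longleftrightarrow> is_fan \<Sigma> \<and> (\<forall>C\<in>\<Sigma>. simplicial_mod_ones C)"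

definition fan_support :: "(real^'n) set set \<Rightarrow> (real^'n) set" where
  "fan_support \<Sigma> = \<Union>\<Sigma>"

definition refines :: "(real^'n) set set \<Rightarrow> (real^'n) set set \<Rightarrow> bool" where
  "refines \<Sigma> \<Sigma>' \<longleftrightarrow> (\<forall>C\<in>\<Sigma>. \<exists>D\<in>\<Sigma>'. C \<subseteq> D)"

end

theory Submission
  imports Defs
begin


definition mx :: "real^'n::finite \<Rightarrow> 'n set \<Rightarrow> real" where
  "mx c S = Max ((\<lambda>i. c$i) ` S)"
definition Mx :: "real^'n::finite \<Rightarrow> 'n set \<Rightarrow> 'n set" where
  "Mx c S = {i\<in>S. \<forall>j\<in>S. c$j \<le> c$i}"
definition KK :: "'n::finite set set \<Rightarrow> real^'n \<Rightarrow> (real^'n) set" where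
  "KK B c0 = {c. \<forall>S\<in>B. Mx c0 S \<subseteq> Mx c S}"
definition hh :: "'n::finite set set \<Rightarrow> real^'n \<Rightarrow> real" where
  "hh B c = (\<Sum>S\<in>B. mx c S)"
definition bary :: "'n::finite set \<Rightarrow> real^'n" where
  "bary M = (\<Sum>i\<in>M. (1 / real (card M)) *\<^sub>R axis i 1)"
definition beta :: "'n::finite set set \<Rightarrow> real^'n \<Rightarrow> real^'n" where
  "beta B c0 = (\<Sum>S\<in>B. bary (Mx c0 S))"

lemma mx_ge: "i \<in> S \<Longrightarrow> c$i \<le> mx c (S::'n::finite set)"
  unfolding mx_def by (rule Max_ge) auto

lemma mx_attained: "S \<noteq> {} \<Longrightarrow> \<exists>i\<in>S. c$i = mx c (S::'n::finite set)"
proof -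
  assume "S \<noteq> {}"
  then have "mx c S \<in> (\<lambda>i. c$i) ` S" unfolding mx_def by (intro Max_in) auto
  then show ?thesis by auto
qed

lemma Mx_eq: "S \<noteq> {} \<Longrightarrow> Mx c S = {i\<in>S. c$i = mx c (S::'n::finite set)}"
proof -
  assume S: "S \<noteq> {}"
  then obtain k where k: "k\<in>S" "c$k = mx c S" using mx_attained by blast
  have "\<And>x. x\<in>S \<Longrightarrow> (\<forall>j\<in>S. c$j \<le> c$x) \<longleftrightarrow> c$x = mx c S"
  proof -
    fix x assume x: "x\<in>S"
    show "(\<forall>j\<in>S. c$j \<le> c$x) \<longleftrightarrow> c$x = mx c S"
    proof
      assume "\<forall>j\<in>S. c$j \<le> c$x" then have "c$k \<le> c$x" using k by auto
      then show "c$x = mx c S" using mx_ge[of x S c] x k by linarith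
    next
      assume "c$x = mx c S" then show "\<forall>j\<in>S. c$j \<le> c$x" using mx_ge[of _ S c] by auto
    qed
  qed
  then show ?thesis unfolding Mx_def by auto
qed

lemma Mx_ne: assumes "S \<noteq> {}" shows "Mx c S \<noteq> {}"
proof -
  obtain k where "k\<in>S" "c$k = mx c S" using mx_attained[OF assms] by blast
  then have "k \<in> Mx c S" using Mx_eq[OF assms] by simp
  then show ?thesis by blast
qed

lemma Mx_sub: "Mx c S \<subseteq> S" unfolding Mx_def by auto

lemma simplexF_iff:
  fixes S :: "'n::finite set"
  shows "x \<in> simplexF S \<longleftrightarrow> (\<exists>u. (\<forall>i\<in>S. 0 \<le> u i) \<and> sum u S = 1 \<and> x = (\<Sum>i\<in>S. u i *\<^sub>R axis i (1::real)))"
proof -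
  let ?f = "\<lambda>i::'n. axis i (1::real)"
  have inj: "inj_on ?f S" by (auto simp: inj_on_def axis_eq_axis)
  have "x \<in> simplexF S \<longleftrightarrow> (\<exists>u. (\<forall>v\<in>?f`S. 0 \<le> u v) \<and> sum u (?f`S) = 1 \<and> (\<Sum>v\<in>?f`S. u v *\<^sub>R v) = x)"
    unfolding simplexF_def by (subst convex_hull_finite) auto
  also have "\<dots> \<longleftrightarrow> (\<exists>u. (\<forall>i\<in>S. 0 \<le> u i) \<and> sum u S = 1 \<and> x = (\<Sum>i\<in>S. u i *\<^sub>R axis i (1::real)))"
  proof
    assume "\<exists>u. (\<forall>v\<in>?f`S. 0 \<le> u v) \<and> sum u (?f`S) = 1 \<and> (\<Sum>v\<in>?f`S. u v *\<^sub>R v) = x"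
    then obtain u where u: "\<forall>v\<in>?f`S. 0 \<le> u v" "sum u (?f`S) = 1" "(\<Sum>v\<in>?f`S. u v *\<^sub>R v) = x" by blast
    show "\<exists>u. (\<forall>i\<in>S. 0 \<le> u i) \<and> sum u S = 1 \<and> x = (\<Sum>i\<in>S. u i *\<^sub>R axis i (1::real))"
      by (rule exI[of _ "u \<circ> ?f"]) (use u inj in \<open>auto simp: sum.reindex\<close>)
  next
    assume "\<exists>u. (\<forall>i\<in>S. 0 \<le> u i) \<and> sum u S = 1 \<and> x = (\<Sum>i\<in>S. u i *\<^sub>R axis i (1::real))"
    then obtain u where u: "\<forall>i\<in>S. 0 \<le> u i" "sum u S = 1" "x = (\<Sum>i\<in>S. u i *\<^sub>R axis i (1::real))" by blast
    define w where "w = u \<circ> inv_into S ?f"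
    have w: "\<And>i. i \<in> S \<Longrightarrow> w (?f i) = u i" unfolding w_def by (auto simp: inv_into_f_f[OF inj])
    show "\<exists>u. (\<forall>v\<in>?f`S. 0 \<le> u v) \<and> sum u (?f`S) = 1 \<and> (\<Sum>v\<in>?f`S. u v *\<^sub>R v) = x"
      by (rule exI[of _ w]) (use u inj w in \<open>auto simp: sum.reindex intro!: sum.cong\<close>)
  qed
  finally show ?thesis .
qed

lemma inner_comb: "c \<bullet> (\<Sum>i\<in>S. u i *\<^sub>R axis i (1::real)) = (\<Sum>i\<in>S. u i * c$i)"
  by (simp add: inner_sum_right inner_axis mult.commute)

lemma simplex_le: "x \<in> simplexF S \<Longrightarrow> c \<bullet> x \<le> mx c S"
proof -
  assume "x \<in> simplexF S"
  then obtain u where u: "\<forall>i\<in>S. 0 \<le> u i" "sum u S = 1" "x = (\<Sum>i\<in>S. u i *\<^sub>R axis i (1::real))"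
    unfolding simplexF_iff by blast
  have "c \<bullet> x = (\<Sum>i\<in>S. u i * c$i)" using u by (simp add: inner_comb)
  also have "\<dots> \<le> (\<Sum>i\<in>S. u i * mx c S)"
    by (rule sum_mono) (use u in \<open>auto intro!: mult_left_mono mx_ge\<close>)
  also have "\<dots> = mx c S" using u by (simp add: sum_distrib_right[symmetric])
  finally show ?thesis .
qed

lemma simplex_eq:
  assumes x: "x \<in> simplexF S" and e: "c0 \<bullet> x = mx c0 S" and sub: "Mx c0 S \<subseteq> Mx c S"
  shows "c \<bullet> x = mx c S"
proof -
  obtain u where u: "\<forall>i\<in>S. 0 \<le> u i" "sum u S = 1" "x = (\<Sum>i\<in>S. u i *\<^sub>R axis i (1::real))"
    using x unfolding simplexF_iff by blast
  have "(\<Sum>i\<in>S. u i * (mx c0 S - c0$i)) = (\<Sum>i\<in>S. u i) * mx c0 S - (\<Sum>i\<in>S. u i * c0$i)"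
    by (simp add: algebra_simps sum_subtractf sum_distrib_right)
  also have "\<dots> = 0" using u e by (simp add: inner_comb)
  finally have z: "(\<Sum>i\<in>S. u i * (mx c0 S - c0$i)) = 0" .
  have nn: "\<forall>i\<in>S. 0 \<le> u i * (mx c0 S - c0$i)" using u by (auto intro!: mult_nonneg_nonneg simp: mx_ge)
  have each: "\<forall>i\<in>S. u i * (mx c0 S - c0$i) = 0"
    using z nn by (subst (asm) sum_nonneg_eq_0_iff) auto
  have "S \<noteq> {}" using u by auto
  have t: "\<forall>i\<in>S. u i * c$i = u i * mx c S"
  proof
    fix i assume i: "i \<in> S"
    show "u i * c$i = u i * mx c S"
    proof (cases "u i = 0")
      case False
      then have "c0$i = mx c0 S" using each i by auto
      then have "i \<in> Mx c0 S" using Mx_eq[OF \<open>S \<noteq> {}\<close>] i by auto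
      then have "i \<in> Mx c S" using sub by auto
      then show ?thesis using Mx_eq[OF \<open>S \<noteq> {}\<close>] by auto
    qed simp
  qed
  have "c \<bullet> x = (\<Sum>i\<in>S. u i * c$i)" using u by (simp add: inner_comb)
  also have "\<dots> = (\<Sum>i\<in>S. u i * mx c S)" using t by (intro sum.cong) auto
  also have "\<dots> = mx c S" using u by (simp add: sum_distrib_right[symmetric])
  finally show ?thesis .
qed

lemma bary_in: assumes "M \<subseteq> S" "M \<noteq> {}" shows "bary M \<in> simplexF S"
proof -
  define u where "u i = (if i \<in> M then 1 / real (card M) else 0)" for i
  have fin: "finite M" by simp
  have c: "card M > 0" using assms fin by (simp add: card_gt_0_iff)
  have "sum u S = sum u M" unfolding u_def using assms by (intro sum.mono_neutral_right) auto
  also have "\<dots> = 1" unfolding u_def using c assms by simp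
  finally have s1: "sum u S = 1" .
  have "(\<Sum>i\<in>S. u i *\<^sub>R axis i (1::real)) = (\<Sum>i\<in>M. u i *\<^sub>R axis i (1::real))"
    unfolding u_def using assms by (intro sum.mono_neutral_right) auto
  also have "\<dots> = bary M" unfolding bary_def u_def by (intro sum.cong) auto
  finally show ?thesis unfolding simplexF_iff using s1 by (intro exI[of _ u]) (auto simp: u_def)
qed

lemma bary_inner: "c \<bullet> bary M = (\<Sum>i\<in>M. c$i) / real (card M)"
  unfolding bary_def by (simp add: inner_comb sum_divide_distrib)

lemma bary_self: assumes "S \<noteq> {}" shows "c \<bullet> bary (Mx c S) = mx c S"
proof -
  have ne: "Mx c S \<noteq> {}" using Mx_ne assms by auto
  have "(\<Sum>i\<in>Mx c S. c$i) = (\<Sum>i\<in>Mx c S. mx c S)"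
    using Mx_eq[OF assms] by (intro sum.cong) auto
  then show ?thesis using ne by (simp add: bary_inner)
qed

lemma bary_max: assumes "M \<subseteq> S" "M \<noteq> {}" "c \<bullet> bary M = mx c S" shows "M \<subseteq> Mx c S"
proof -
  have c: "card M > 0" using assms by (simp add: card_gt_0_iff)
  have "(\<Sum>i\<in>M. c$i) = mx c S * real (card M)" using assms(2,3) c by (simp add: bary_inner divide_eq_eq)
  then have "(\<Sum>i\<in>M. mx c S - c$i) = 0" by (simp add: sum_subtractf)
  moreover have "\<forall>i\<in>M. 0 \<le> mx c S - c$i" using assms(1) mx_ge[of _ S c] by auto
  ultimately have "\<forall>i\<in>M. mx c S - c$i = 0" by (subst (asm) sum_nonneg_eq_0_iff) auto
  moreover have "S \<noteq> {}" using assms(1,2) by blast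
  ultimately show ?thesis using assms(1) Mx_eq[of S c] by auto
qed

lemma sum_eq_each:
  fixes f g :: "'a \<Rightarrow> real"
  assumes "finite A" "\<forall>a\<in>A. f a \<le> g a" "sum f A = sum g A" "a \<in> A"
  shows "f a = g a"
proof -
  have "sum (\<lambda>a. g a - f a) A = 0" using assms by (simp add: sum_subtractf)
  then have "\<forall>a\<in>A. g a - f a = 0" using assms by (subst (asm) sum_nonneg_eq_0_iff) auto
  then show ?thesis using assms by auto
qed

lemma P_le: "x \<in> minkowski_family B \<Longrightarrow> c \<bullet> x \<le> hh B c"
  unfolding minkowski_family_def hh_def
  by (auto simp: inner_sum_right intro!: sum_mono simplex_le)

lemma beta_in: assumes "\<forall>S\<in>B. S \<noteq> {}" shows "beta B c0 \<in> minkowski_family B"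
proof -
  have bb: "\<forall>S\<in>B. bary (Mx c0 S) \<in> simplexF S"
  proof
    fix S assume "S \<in> B"
    then have "S \<noteq> {}" using assms by blast
    then show "bary (Mx c0 S) \<in> simplexF S" by (intro bary_in Mx_sub Mx_ne)
  qed
  show ?thesis unfolding minkowski_family_def beta_def
    apply (rule CollectI)
    apply (rule exI[of _ "\<lambda>S. bary (Mx c0 S)"])
    apply (rule conjI)
     apply (rule refl)
    apply (rule bb)
    done
qed

lemma beta_K:
  assumes ne: "\<forall>S\<in>B. S \<noteq> {}"
  shows "c \<bullet> beta B c0 = hh B c \<longleftrightarrow> c \<in> KK B c0"
proof
  assume c: "c \<in> KK B c0"
  show "c \<bullet> beta B c0 = hh B c" unfolding beta_def hh_def inner_sum_right
  proof (rule sum.cong[OF refl])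
    fix S assume S: "S \<in> B"
    have Sne: "S \<noteq> {}" using S ne by blast
    have a: "bary (Mx c0 S) \<in> simplexF S" using Sne by (intro bary_in Mx_sub Mx_ne)
    have b: "c0 \<bullet> bary (Mx c0 S) = mx c0 S" using Sne by (rule bary_self)
    have d: "Mx c0 S \<subseteq> Mx c S" using c S unfolding KK_def by blast
    show "c \<bullet> bary (Mx c0 S) = mx c S" by (rule simplex_eq[OF a b d])
  qed
next
  assume e: "c \<bullet> beta B c0 = hh B c"
  show "c \<in> KK B c0" unfolding KK_def
  proof (rule CollectI, rule ballI)
    fix S assume S: "S \<in> B"
    have le: "\<forall>S\<in>B. c \<bullet> bary (Mx c0 S) \<le> mx c S"
    proof
      fix S assume "S \<in> B"
      then have "S \<noteq> {}" using ne by blast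
      then have "bary (Mx c0 S) \<in> simplexF S" by (intro bary_in Mx_sub Mx_ne)
      then show "c \<bullet> bary (Mx c0 S) \<le> mx c S" by (rule simplex_le)
    qed
    have sm: "(\<Sum>S\<in>B. c \<bullet> bary (Mx c0 S)) = (\<Sum>S\<in>B. mx c S)"
      using e by (simp add: beta_def hh_def inner_sum_right)
    have eq: "c \<bullet> bary (Mx c0 S) = mx c S"
      using sum_eq_each[of B "\<lambda>S. c \<bullet> bary (Mx c0 S)" "\<lambda>S. mx c S" S] le S sm by simp
    have Sne: "S \<noteq> {}" using S ne by blast
    show "Mx c0 S \<subseteq> Mx c S" by (rule bary_max[OF Mx_sub Mx_ne[OF Sne] eq])
  qed
qed

lemma G_K:
  assumes x: "x \<in> minkowski_family B" and e: "c0 \<bullet> x = hh B c0" and c: "c \<in> KK B c0"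
  shows "c \<bullet> x = hh B c"
proof -
  obtain xs where xs: "\<forall>F\<in>B. xs F \<in> simplexF F" "x = (\<Sum>F\<in>B. xs F)"
    using x unfolding minkowski_family_def by blast
  have le: "\<forall>F\<in>B. c0 \<bullet> xs F \<le> mx c0 F" using xs simplex_le by auto
  have sm: "(\<Sum>F\<in>B. c0 \<bullet> xs F) = (\<Sum>F\<in>B. mx c0 F)"
    using e xs by (simp add: hh_def inner_sum_right)
  have eqs: "\<forall>F\<in>B. c0 \<bullet> xs F = mx c0 F"
  proof
    fix F assume F: "F \<in> B"
    show "c0 \<bullet> xs F = mx c0 F"
      using sum_eq_each[of B "\<lambda>F. c0 \<bullet> xs F" "\<lambda>F. mx c0 F" F] le F sm by simp
  qed
  have "\<forall>F\<in>B. c \<bullet> xs F = mx c F"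
  proof
    fix F assume F: "F \<in> B"
    have a: "xs F \<in> simplexF F" using xs(1) F by blast
    have b: "c0 \<bullet> xs F = mx c0 F" using eqs F by blast
    have d: "Mx c0 F \<subseteq> Mx c F" using c F unfolding KK_def by blast
    show "c \<bullet> xs F = mx c F" by (rule simplex_eq[OF a b d])
  qed
  then show ?thesis using xs by (simp add: hh_def inner_sum_right)
qed



lemma finite_setsum: "finite I \<Longrightarrow> (\<forall>i\<in>I. finite (E i)) \<Longrightarrow> finite (sum E I)"
  by (induction I rule: finite_induct) (auto simp: finite_set_plus)

lemma P_sum: "minkowski_family B = sum simplexF (B::'n::finite set set)"
  by (simp add: set_sum_alt minkowski_family_def)

lemma P_polytope: "polytope (minkowski_family (B::'n::finite set set))"
proof -
  let ?E = "\<lambda>F::'n set. (\<lambda>i. axis i (1::real)) ` F"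
  have "minkowski_family B = sum (\<lambda>F. convex hull ?E F) B"
    unfolding P_sum simplexF_def ..
  also have "\<dots> = convex hull (sum ?E B)" by (simp add: convex_hull_set_sum)
  finally show ?thesis unfolding polytope_def using finite_setsum[of B ?E] by auto
qed

lemma P_convex: "convex (minkowski_family (B::'n::finite set set))"
  using P_polytope polytope_imp_convex by blast

definition GG :: "'n::finite set set \<Rightarrow> real^'n \<Rightarrow> (real^'n) set" where
  "GG B c0 = {x \<in> minkowski_family B. \<forall>y\<in>minkowski_family B. c0 \<bullet> y \<le> c0 \<bullet> x}"

lemma K_self: "c \<in> KK B c" by (simp add: KK_def)

lemma beta_self: "\<forall>S\<in>B. S \<noteq> {} \<Longrightarrow> c \<bullet> beta B c = hh B c"
  using beta_K K_self by blast

lemma GG_eq: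
  assumes ne: "\<forall>S\<in>B. S \<noteq> {}"
  shows "GG B c0 = minkowski_family B \<inter> {x. c0 \<bullet> x = hh B c0}"
proof (intro set_eqI iffI)
  fix x assume x: "x \<in> GG B c0"
  then have "c0 \<bullet> beta B c0 \<le> c0 \<bullet> x" "x \<in> minkowski_family B"
    using beta_in[OF ne] unfolding GG_def by auto
  then show "x \<in> minkowski_family B \<inter> {x. c0 \<bullet> x = hh B c0}"
    using beta_self[OF ne, of c0] P_le[of x B c0] by auto
next
  fix x assume "x \<in> minkowski_family B \<inter> {x. c0 \<bullet> x = hh B c0}"
  then show "x \<in> GG B c0" unfolding GG_def using P_le[of _ B c0] by auto
qed

lemma GG_face:
  assumes ne: "\<forall>S\<in>B. S \<noteq> {}"
  shows "GG B c0 face_of minkowski_family B" "GG B c0 \<noteq> {}"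
proof -
  show "GG B c0 face_of minkowski_family B"
    unfolding GG_eq[OF ne]
    by (rule face_of_Int_supporting_hyperplane_le[OF P_convex]) (rule P_le)
  have "beta B c0 \<in> GG B c0" unfolding GG_eq[OF ne] using beta_in[OF ne] beta_self[OF ne] by auto
  then show "GG B c0 \<noteq> {}" by blast
qed

lemma normal_cone_GG:
  assumes ne: "\<forall>S\<in>B. S \<noteq> {}"
  shows "normal_cone (minkowski_family B) (GG B c0) = KK B c0"
proof (intro set_eqI iffI)
  fix c assume c: "c \<in> normal_cone (minkowski_family B) (GG B c0)"
  have b0: "beta B c0 \<in> GG B c0" unfolding GG_eq[OF ne] using beta_in[OF ne] beta_self[OF ne] by auto
  have "c \<bullet> beta B c \<le> c \<bullet> beta B c0"
    using c b0 beta_in[OF ne, of c] unfolding normal_cone_def by blast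
  moreover have "c \<bullet> beta B c0 \<le> hh B c" using P_le beta_in[OF ne] by blast
  ultimately have "c \<bullet> beta B c0 = hh B c" using beta_self[OF ne, of c] by linarith
  then show "c \<in> KK B c0" using beta_K[OF ne] by blast
next
  fix c assume c: "c \<in> KK B c0"
  show "c \<in> normal_cone (minkowski_family B) (GG B c0)"
    unfolding normal_cone_def
  proof (intro CollectI ballI)
    fix x y assume x: "x \<in> GG B c0" and y: "y \<in> minkowski_family B"
    have "c \<bullet> x = hh B c" using x c G_K unfolding GG_eq[OF ne] by blast
    then show "c \<bullet> y \<le> c \<bullet> x" using P_le[OF y] by simp
  qed
qed

lemma face_GG:
  assumes ne: "\<forall>S\<in>B. S \<noteq> {}" and G: "G face_of minkowski_family B" "G \<noteq> {}"
  shows "\<exists>c0. G = GG B c0"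
proof -
  have "G exposed_face_of minkowski_family B"
    using exposed_face_of_polyhedron[OF polytope_imp_polyhedron[OF P_polytope]] G by blast
  then obtain a b where ab: "minkowski_family B \<subseteq> {x. a \<bullet> x \<le> b}"
      "G = minkowski_family B \<inter> {x. a \<bullet> x = b}"
    unfolding exposed_face_of_def by blast
  obtain g where g: "g \<in> G" using G by blast
  have "G = GG B a"
  proof (intro set_eqI iffI)
    fix x assume "x \<in> G" then show "x \<in> GG B a" using ab unfolding GG_def by auto
  next
    fix x assume x: "x \<in> GG B a"
    have "a \<bullet> g \<le> a \<bullet> x" "g \<in> minkowski_family B" using x g ab unfolding GG_def by auto
    moreover have "a \<bullet> g = b" using g ab by auto
    moreover have "a \<bullet> x \<le> b" "x \<in> minkowski_family B" using x ab unfolding GG_def by auto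
    ultimately show "x \<in> G" using ab by auto
  qed
  then show ?thesis by blast
qed

lemma normal_fan_eq:
  assumes ne: "\<forall>S\<in>B. S \<noteq> {}"
  shows "normal_fan (minkowski_family B) = range (KK B)"
proof (intro set_eqI iffI)
  fix C assume "C \<in> normal_fan (minkowski_family B)"
  then obtain G where G: "C = normal_cone (minkowski_family B) G" "G face_of minkowski_family B" "G \<noteq> {}"
    unfolding normal_fan_def by blast
  then obtain c0 where "G = GG B c0" using face_GG[OF ne] by blast
  then show "C \<in> range (KK B)" using G normal_cone_GG[OF ne] by auto
next
  fix C assume "C \<in> range (KK B)"
  then obtain c0 where C: "C = KK B c0" by blast
  show "C \<in> normal_fan (minkowski_family B)"
    unfolding normal_fan_def C using GG_face[OF ne, of c0] normal_cone_GG[OF ne, of c0]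
    by blast
qed



lemma KK_alt: "KK B c0 = {c. \<forall>S\<in>B. \<forall>i\<in>Mx c0 S. \<forall>j\<in>S. c$j \<le> c$i}"
  unfolding KK_def Mx_def by blast

lemma KK_convex: "convex (KK B c0)"
  unfolding convex_def KK_alt
proof (intro ballI allI impI CollectI)
  fix x y :: "real^'a" and u v :: real and S i j
  assume x: "x \<in> {c. \<forall>S\<in>B. \<forall>i\<in>Mx c0 S. \<forall>j\<in>S. c $ j \<le> c $ i}"
    and y: "y \<in> {c. \<forall>S\<in>B. \<forall>i\<in>Mx c0 S. \<forall>j\<in>S. c $ j \<le> c $ i}"
    and uv: "0 \<le> u" "0 \<le> v" "u + v = 1" and S: "S \<in> B" "i \<in> Mx c0 S" "j \<in> S"
  have "x$j \<le> x$i" "y$j \<le> y$i" using x y S by auto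
  then show "(u *\<^sub>R x + v *\<^sub>R y) $ j \<le> (u *\<^sub>R x + v *\<^sub>R y) $ i"
    using uv by (simp add: add_mono mult_left_mono)
qed

lemma KK_cone: "cone (KK B c0)"
  unfolding cone_def KK_alt
  by (auto intro!: mult_left_mono)

lemma KK_closed: "closed (KK B c0)"
proof -
  have hs: "closed {c::real^'a. c$j \<le> c$i}" for i j
  proof -
    have "{c::real^'a. c$j \<le> c$i} = {c. (axis j 1 - axis i 1) \<bullet> c \<le> 0}"
      by (auto simp: inner_diff_left inner_axis')
    then show ?thesis by (simp add: closed_halfspace_le)
  qed
  have "KK B c0 = (\<Inter>S\<in>B. \<Inter>i\<in>Mx c0 S. \<Inter>j\<in>S. {c. c$j \<le> c$i})"
    unfolding KK_alt by blast
  then show ?thesis using hs by (simp add: closed_INT)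
qed

lemma KK_inter_face:
  assumes ne: "\<forall>S\<in>B. S \<noteq> {}"
  shows "(KK B c0 \<inter> KK B c1) face_of KK B c0"
proof -
  let ?a = "beta B c1 - beta B c0"
  have eq: "KK B c0 \<inter> KK B c1 = KK B c0 \<inter> {c. ?a \<bullet> c = 0}"
  proof (intro set_eqI iffI)
    fix c assume c: "c \<in> KK B c0 \<inter> KK B c1"
    then have "c \<bullet> beta B c0 = hh B c" "c \<bullet> beta B c1 = hh B c" using beta_K[OF ne] by blast+
    then show "c \<in> KK B c0 \<inter> {c. ?a \<bullet> c = 0}" using c by (simp add: inner_diff_left inner_diff_right inner_commute)
  next
    fix c assume c: "c \<in> KK B c0 \<inter> {c. ?a \<bullet> c = 0}"
    then have "c \<bullet> beta B c0 = hh B c" using beta_K[OF ne] by blast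
    then have "c \<bullet> beta B c1 = hh B c" using c by (simp add: inner_diff_left inner_diff_right inner_commute)
    then show "c \<in> KK B c0 \<inter> KK B c1" using c beta_K[OF ne] by blast
  qed
  have le: "?a \<bullet> c \<le> 0" if c: "c \<in> KK B c0" for c
  proof -
    have "c \<bullet> beta B c0 = hh B c" using c beta_K[OF ne] by blast
    moreover have "c \<bullet> beta B c1 \<le> hh B c" using P_le beta_in[OF ne] by blast
    ultimately show ?thesis by (simp add: inner_diff_left inner_diff_right inner_commute)
  qed
  show ?thesis unfolding eq
    by (rule face_of_Int_supporting_hyperplane_le[OF KK_convex]) (rule le)
qed

lemma Mx_scale: "t > 0 \<Longrightarrow> Mx (t *\<^sub>R a) S = Mx a S"
  unfolding Mx_def by auto

lemma Mx_add:
  assumes "Mx a S \<inter> Mx b S \<noteq> {}"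
  shows "Mx (a + b) S = Mx a S \<inter> Mx b S"
proof -
  obtain k where k: "k \<in> Mx a S" "k \<in> Mx b S" using assms by blast
  show ?thesis
  proof (intro set_eqI iffI)
    fix i assume i: "i \<in> Mx (a + b) S"
    then have iS: "i \<in> S" and "a$k + b$k \<le> a$i + b$i" using k unfolding Mx_def by auto
    moreover have "a$i \<le> a$k" "b$i \<le> b$k" using k iS unfolding Mx_def by auto
    ultimately have "a$i = a$k" "b$i = b$k" by linarith+
    then show "i \<in> Mx a S \<inter> Mx b S" using k iS unfolding Mx_def by auto
  next
    fix i assume "i \<in> Mx a S \<inter> Mx b S"
    then show "i \<in> Mx (a + b) S" unfolding Mx_def by (auto intro: add_mono)
  qed
qed

lemma face_KK:
  assumes ne: "\<forall>S\<in>B. S \<noteq> {}" and D: "D face_of KK B c0" "D \<noteq> {}"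
  shows "\<exists>c1. D = KK B c1"
proof -
  define sz where "sz c = (\<Sum>S\<in>B. card (Mx c S))" for c
  obtain d where "d \<in> D" using D by blast
  then obtain c1 where c1: "c1 \<in> D" and min: "\<And>c. c \<in> D \<Longrightarrow> sz c1 \<le> sz c"
    using ex_has_least_nat[of "\<lambda>c. c \<in> D" d sz] by blast
  have DK: "D \<subseteq> KK B c0" using D face_of_imp_subset by blast
  have cD: "convex D" using D face_of_imp_convex by blast
  have c1K: "c1 \<in> KK B c0" using c1 DK by blast
  have "D \<subseteq> KK B c1"
  proof
    fix c assume c: "c \<in> D"
    define m where "m = (1/2) *\<^sub>R (c1 + c)"
    have "(1/2) *\<^sub>R c1 + (1/2) *\<^sub>R c \<in> D" using cD c1 c unfolding convex_def by auto
    then have mD: "m \<in> D" unfolding m_def by (simp add: scaleR_right_distrib)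
    have cK: "c \<in> KK B c0" using c DK by blast
    have Mxm: "Mx m S = Mx c1 S \<inter> Mx c S" if S: "S \<in> B" for S
    proof -
      have "Mx c0 S \<subseteq> Mx c1 S \<inter> Mx c S" using c1K cK S unfolding KK_def by blast
      moreover have "Mx c0 S \<noteq> {}" using Mx_ne ne S by blast
      ultimately have "Mx c1 S \<inter> Mx c S \<noteq> {}" by blast
      then show ?thesis unfolding m_def by (simp add: Mx_scale Mx_add)
    qed
    have le: "\<forall>S\<in>B. card (Mx m S) \<le> card (Mx c1 S)"
      using Mxm by (auto intro!: card_mono)
    have "\<forall>S\<in>B. card (Mx m S) = card (Mx c1 S)"
    proof (rule ccontr)
      assume "\<not> (\<forall>S\<in>B. card (Mx m S) = card (Mx c1 S))"
      then have "\<exists>S\<in>B. card (Mx m S) < card (Mx c1 S)" using le by force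
      then have "sz m < sz c1" unfolding sz_def using le by (intro sum_strict_mono_ex1) auto
      then show False using min[OF mD] by simp
    qed
    then show "c \<in> KK B c1" unfolding KK_def
    proof (intro CollectI ballI)
      fix S assume S: "S \<in> B" and "\<forall>S\<in>B. card (Mx m S) = card (Mx c1 S)"
      then have "card (Mx m S) = card (Mx c1 S)" by blast
      then have "Mx m S = Mx c1 S" using Mxm[OF S] by (intro card_subset_eq) auto
      then show "Mx c1 S \<subseteq> Mx c S" using Mxm[OF S] by blast
    qed
  qed
  moreover have "KK B c1 \<subseteq> D"
  proof
    fix c assume c: "c \<in> KK B c1"
    show "c \<in> D"
    proof (cases "c = c1")
      case True then show ?thesis using c1 by simp
    next
      case False
      define z where "z t = c1 + t *\<^sub>R (c1 - c)" for t :: real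
      let ?T = "{(S, i, j). S \<in> B \<and> i \<in> Mx c0 S \<and> j \<in> S}"
      have fin: "finite ?T" by simp
      have ev1: "\<forall>\<^sub>F t in at_right 0. \<forall>p\<in>?T. (z t)$(snd (snd p)) \<le> (z t)$(fst (snd p))"
      proof (rule eventually_ball_finite[OF fin], rule ballI)
        fix p assume "p \<in> ?T"
        then obtain S i j where p: "p = (S, i, j)" "S \<in> B" "i \<in> Mx c0 S" "j \<in> S" by blast
        have i1: "i \<in> Mx c1 S" using p c1K unfolding KK_def by blast
        then have le1: "c1$j \<le> c1$i" using p unfolding Mx_def by blast
        show "\<forall>\<^sub>F t in at_right 0. (z t)$(snd (snd p)) \<le> (z t)$(fst (snd p))"
        proof (cases "c1$j < c1$i")
          case True
          have "((\<lambda>t. (z t)$i - (z t)$j) \<longlongrightarrow> c1$i - c1$j) (at_right 0)"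
            unfolding z_def by (auto intro!: tendsto_eq_intros)
          then have "\<forall>\<^sub>F t in at_right 0. 0 < (z t)$i - (z t)$j"
            using True by (intro order_tendstoD(1)) auto
          then show ?thesis using p by (auto elim: eventually_mono)
        next
          case False
          then have eq: "c1$j = c1$i" using le1 by simp
          then have "j \<in> Mx c1 S" using i1 p unfolding Mx_def by auto
          then have "i \<in> Mx c S" "j \<in> Mx c S" using i1 c p unfolding KK_def by blast+
          then have "c$i = c$j" using p unfolding Mx_def by (auto intro: antisym)
          then show ?thesis using p eq unfolding z_def by simp
        qed
      qed
      have "\<forall>\<^sub>F t in at_right 0. 0 < t \<and> (\<forall>p\<in>?T. (z t)$(snd (snd p)) \<le> (z t)$(fst (snd p)))"
        using eventually_conj[OF eventually_at_right_less ev1] by simp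
      then obtain t where t: "0 < t" "\<forall>p\<in>?T. (z t)$(snd (snd p)) \<le> (z t)$(fst (snd p))"
        using eventually_happens'[OF trivial_limit_at_right_real] by blast
      have zK: "z t \<in> KK B c0" unfolding KK_alt
      proof (intro CollectI ballI)
        fix S i j assume "S \<in> B" "i \<in> Mx c0 S" "j \<in> S"
        then have "(S, i, j) \<in> ?T" by simp
        then show "(z t)$j \<le> (z t)$i" using t by fastforce
      qed
      have cz: "c \<noteq> z t"
      proof
        assume "c = z t"
        then have "(1 + t) *\<^sub>R (c1 - c) = 0" unfolding z_def by (simp add: algebra_simps)
        then show False using t False by simp
      qed
      define u where "u = 1 / (1 + t)"
      have u: "0 < u" "u < 1" "u + u * t = 1" using t unfolding u_def by (auto simp: field_simps)
      have "(1 - u) *\<^sub>R c + u *\<^sub>R z t = (1 - (u + u * t)) *\<^sub>R c + (u + u * t) *\<^sub>R c1"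
        unfolding z_def by (simp add: algebra_simps)
      also have "\<dots> = c1" using u by simp
      finally have seg: "c1 \<in> open_segment c (z t)" unfolding in_segment using cz u by metis
      have cK0: "c \<in> KK B c0" using c c1K unfolding KK_def by blast
      show "c \<in> D" using D(1) c1 zK cK0 seg unfolding face_of_def by blast
    qed
  qed
  ultimately show ?thesis by blast
qed



definition ind :: "'n::finite set \<Rightarrow> real^'n" where
  "ind T = (\<chi> i. if i \<in> T then 1 else 0)"

lemma ind_nth [simp]: "ind T $ i = (if i \<in> T then 1 else 0)"
  by (simp add: ind_def)

lemma ones_nth [simp]: "ones $ i = 1"
  by (simp add: ones_def)

lemma ind_UNIV: "ind UNIV = ones"
  by (simp add: vec_eq_iff)

lemma ind_inj: "inj_on ind (X :: 'n::finite set set)"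
proof (rule inj_onI)
  fix S T :: "'n set" assume "ind S = ind T"
  then have "\<forall>i. (if i \<in> S then 1 else 0 :: real) = (if i \<in> T then 1 else 0)"
    by (simp add: vec_eq_iff)
  then show "S = T" by (metis one_neq_zero subsetI subset_antisym)
qed

lemma nind_inj: "inj_on (\<lambda>T. - ind T) (X :: 'n::finite set set)"
  using ind_inj unfolding inj_on_def by (metis neg_equal_iff_equal)

locale bset =
  fixes B :: "'n::finite set set" and c0 :: "real^'n"
  assumes ne: "\<forall>S\<in>B. S \<noteq> {}"
    and univ: "UNIV \<in> B"
    and un: "\<And>S T. S \<in> B \<Longrightarrow> T \<in> B \<Longrightarrow> S \<inter> T \<noteq> {} \<Longrightarrow> S \<union> T \<in> B"
    and sing: "\<And>i. {i} \<in> B"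
begin

definition L :: "real \<Rightarrow> 'n set" where "L v = {i. c0$i \<le> v}"

definition comp :: "real \<Rightarrow> 'n set \<Rightarrow> bool" where
  "comp v T \<longleftrightarrow> T \<in> B \<and> T \<subseteq> L v \<and> (\<forall>S\<in>B. T \<subseteq> S \<longrightarrow> S \<subseteq> L v \<longrightarrow> S = T)"

definition NN :: "'n set set" where "NN = {T. \<exists>v. comp v T}"

definition Cx :: "'n \<Rightarrow> 'n set" where
  "Cx x = \<Union>{S\<in>B. x \<in> S \<and> S \<subseteq> L (c0$x)}"

definition par :: "'n set \<Rightarrow> 'n set" where
  "par T = (SOME S. S \<in> NN \<and> T \<subset> S \<and> (\<forall>S'\<in>NN. T \<subset> S' \<longrightarrow> S \<subseteq> S'))"

lemma L_mono: "v \<le> w \<Longrightarrow> L v \<subseteq> L w"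
  unfolding L_def by auto

lemma lam:
  assumes "comp v T1" "comp w T2" "v \<le> w" "T1 \<inter> T2 \<noteq> {}"
  shows "T1 \<subseteq> T2"
proof -
  have c1: "T1 \<in> B" "T1 \<subseteq> L v" using assms(1) unfolding comp_def by auto
  have c2: "T2 \<in> B" "T2 \<subseteq> L w" "\<forall>S\<in>B. T2 \<subseteq> S \<longrightarrow> S \<subseteq> L w \<longrightarrow> S = T2"
    using assms(2) unfolding comp_def by auto
  have "T1 \<union> T2 \<in> B" using un[OF c1(1) c2(1) assms(4)] .
  moreover have "T1 \<union> T2 \<subseteq> L w" using c1 c2 L_mono[OF assms(3)] by blast
  ultimately have "T1 \<union> T2 = T2" using c2(3) by blast
  then show ?thesis by blast
qed

lemma lam2:
  assumes "T1 \<in> NN" "T2 \<in> NN" "T1 \<inter> T2 \<noteq> {}"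
  shows "T1 \<subseteq> T2 \<or> T2 \<subseteq> T1"
proof -
  obtain v w where "comp v T1" "comp w T2" using assms unfolding NN_def by blast
  then show ?thesis using lam assms(3) by (metis inf_commute linear)
qed

lemma NN_B: "T \<in> NN \<Longrightarrow> T \<in> B"
  unfolding NN_def comp_def by blast

lemma NN_ne: "T \<in> NN \<Longrightarrow> T \<noteq> {}"
  using NN_B ne by blast

lemma union_lemma:
  assumes "finite X" "X \<noteq> {}" "X \<subseteq> B" "\<forall>S\<in>X. x \<in> S"
  shows "\<Union>X \<in> B"
  using assms
proof (induction X rule: finite_ne_induct)
  case (singleton S) then show ?case by simp
next
  case (insert S X)
  then have "\<Union>X \<in> B" "S \<in> B" "x \<in> S" "x \<in> \<Union>X" by auto
  then show ?case using un[of S "\<Union>X"] by auto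
qed

lemma Cx_comp: "comp (c0$x) (Cx x)" and Cx_mem: "x \<in> Cx x"
proof -
  let ?X = "{S\<in>B. x \<in> S \<and> S \<subseteq> L (c0$x)}"
  have sx: "{x} \<in> ?X" using sing unfolding L_def by auto
  have "Cx x \<in> B" unfolding Cx_def using sx by (intro union_lemma[of ?X x]) auto
  moreover have "Cx x \<subseteq> L (c0$x)" unfolding Cx_def by blast
  moreover have "\<forall>S\<in>B. Cx x \<subseteq> S \<longrightarrow> S \<subseteq> L (c0$x) \<longrightarrow> S = Cx x"
  proof (intro ballI impI)
    fix S assume S: "S \<in> B" "Cx x \<subseteq> S" "S \<subseteq> L (c0$x)"
    have "x \<in> Cx x" unfolding Cx_def using sx by blast
    then have "S \<in> ?X" using S by blast
    then have "S \<subseteq> Cx x" unfolding Cx_def by blast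
    then show "S = Cx x" using S by blast
  qed
  ultimately show "comp (c0$x) (Cx x)" unfolding comp_def by blast
  show "x \<in> Cx x" unfolding Cx_def using sx by blast
qed

lemma Cx_NN: "Cx x \<in> NN"
  unfolding NN_def using Cx_comp by blast

lemma Cx_min:
  assumes "T \<in> NN" "x \<in> T"
  shows "Cx x \<subseteq> T"
proof -
  obtain w where w: "comp w T" using assms unfolding NN_def by blast
  then have "c0$x \<le> w" using assms unfolding comp_def L_def by blast
  then show ?thesis using lam[OF Cx_comp w] Cx_mem assms by blast
qed

lemma univ_NN: "UNIV \<in> NN"
proof -
  define v where "v = Max (range (\<lambda>i. c0$i))"
  have "UNIV \<subseteq> L v" unfolding L_def v_def by (auto intro: Max_ge)
  then have "comp v UNIV" unfolding comp_def using univ by blast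
  then show ?thesis unfolding NN_def by blast
qed

lemma top_elem:
  assumes "T \<in> NN"
  shows "\<exists>x\<in>T. \<forall>T'\<in>NN. T' \<subset> T \<longrightarrow> x \<notin> T'"
proof -
  obtain x where x: "x \<in> T" "c0$x = mx c0 T" using mx_attained NN_ne[OF assms] by blast
  have "\<forall>T'\<in>NN. T' \<subset> T \<longrightarrow> x \<notin> T'"
  proof (intro ballI impI notI)
    fix T' assume T': "T' \<in> NN" "T' \<subset> T" "x \<in> T'"
    obtain w where w: "comp w T'" using T' unfolding NN_def by blast
    then have "c0$x \<le> w" using T' unfolding comp_def L_def by blast
    then have "T \<subseteq> L w" using x mx_ge[of _ T c0] unfolding L_def by fastforce
    then have "T = T'" using w T' NN_B[OF assms] unfolding comp_def by blast
    then show False using T' by blast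
  qed
  then show ?thesis using x by blast
qed

lemma ind_K:
  assumes "T \<in> NN" "S \<in> B" "i \<in> Mx c0 S" "j \<in> S" "i \<in> T"
  shows "j \<in> T"
proof -
  obtain v where v: "comp v T" using assms unfolding NN_def by blast
  then have "c0$i \<le> v" using assms unfolding comp_def L_def by blast
  then have "S \<subseteq> L v" using assms(3) unfolding Mx_def L_def by fastforce
  moreover have "S \<inter> T \<noteq> {}" using assms(3,5) Mx_sub[of c0 S] by blast
  then have "S \<union> T \<in> B" using un[OF assms(2) NN_B[OF assms(1)]] by blast
  ultimately have "S \<union> T = T" using v unfolding comp_def by blast
  then show ?thesis using assms by blast
qed

lemma cone_sub:
  assumes "\<forall>T\<in>NN - {UNIV}. 0 \<le> a T"
  shows "(\<Sum>T\<in>NN - {UNIV}. a T *\<^sub>R (- ind T)) + t *\<^sub>R ones \<in> KK B c0"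
  unfolding KK_alt
proof (intro CollectI ballI)
  fix S i j assume S: "S \<in> B" "i \<in> Mx c0 S" "j \<in> S"
  have "(\<Sum>T\<in>NN - {UNIV}. a T * - (if j \<in> T then 1 else 0)) \<le> (\<Sum>T\<in>NN - {UNIV}. a T * - (if i \<in> T then 1 else 0))"
  proof (rule sum_mono)
    fix T assume T: "T \<in> NN - {UNIV}"
    show "a T * - (if j \<in> T then 1 else 0) \<le> a T * - (if i \<in> T then 1 else 0)"
      using ind_K[of T S i j] T S assms by auto
  qed
  then show "((\<Sum>T\<in>NN - {UNIV}. a T *\<^sub>R - ind T) + t *\<^sub>R ones) $ j
        \<le> ((\<Sum>T\<in>NN - {UNIV}. a T *\<^sub>R - ind T) + t *\<^sub>R ones) $ i"
    by simp
qed

lemma par_spec: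
  assumes "T \<in> NN" "T \<noteq> UNIV"
  shows "par T \<in> NN \<and> T \<subset> par T \<and> (\<forall>S'\<in>NN. T \<subset> S' \<longrightarrow> par T \<subseteq> S')"
proof -
  have "UNIV \<in> NN \<and> T \<subset> UNIV" using univ_NN assms by blast
  then obtain S0 where S0: "S0 \<in> NN \<and> T \<subset> S0" and m: "\<And>S'. S' \<in> NN \<and> T \<subset> S' \<Longrightarrow> card S0 \<le> card S'"
    using ex_has_least_nat[of "\<lambda>S. S \<in> NN \<and> T \<subset> S" UNIV card] by blast
  have "\<forall>S'\<in>NN. T \<subset> S' \<longrightarrow> S0 \<subseteq> S'"
  proof (intro ballI impI)
    fix S' assume S': "S' \<in> NN" "T \<subset> S'"
    have "S0 \<inter> S' \<noteq> {}" using S0 S' NN_ne[OF assms(1)] by blast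
    then have "S0 \<subseteq> S' \<or> S' \<subseteq> S0" using lam2 S0 S' by blast
    moreover have "\<not> S' \<subset> S0"
    proof
      assume "S' \<subset> S0"
      then have "card S' < card S0" by (simp add: psubset_card_mono)
      then show False using m[of S'] S' by simp
    qed
    ultimately show "S0 \<subseteq> S'" by blast
  qed
  then have "\<exists>S. S \<in> NN \<and> T \<subset> S \<and> (\<forall>S'\<in>NN. T \<subset> S' \<longrightarrow> S \<subseteq> S')" using S0 by blast
  then show ?thesis unfolding par_def by (rule someI_ex)
qed

lemma par_bij:
  "bij_betw par ({T\<in>NN. x \<in> T} - {UNIV}) ({T\<in>NN. x \<in> T} - {Cx x})"
proof -
  let ?Ch = "{T\<in>NN. x \<in> T}"
  have img: "par ` (?Ch - {UNIV}) \<subseteq> ?Ch - {Cx x}"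
  proof
    fix S assume "S \<in> par ` (?Ch - {UNIV})"
    then obtain T where T: "T \<in> ?Ch - {UNIV}" "S = par T" by blast
    have p: "par T \<in> NN" "T \<subset> par T" using par_spec[of T] T by auto
    have "Cx x \<subseteq> T" using Cx_min T by blast
    then show "S \<in> ?Ch - {Cx x}" using p T by blast
  qed
  have inj: "inj_on par (?Ch - {UNIV})"
  proof (rule inj_onI, rule ccontr)
    fix T1 T2 assume T: "T1 \<in> ?Ch - {UNIV}" "T2 \<in> ?Ch - {UNIV}" "par T1 = par T2" "T1 \<noteq> T2"
    have "T1 \<subseteq> T2 \<or> T2 \<subseteq> T1" using lam2[of T1 T2] T by blast
    then have "T1 \<subset> T2 \<or> T2 \<subset> T1" using T by blast
    moreover have "\<not> T1 \<subset> T2"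
    proof
      assume "T1 \<subset> T2"
      then have "par T1 \<subseteq> T2" using par_spec[of T1] T by blast
      moreover have "T2 \<subset> par T2" using par_spec[of T2] T by blast
      ultimately show False using T by blast
    qed
    moreover have "\<not> T2 \<subset> T1"
    proof
      assume "T2 \<subset> T1"
      then have "par T2 \<subseteq> T1" using par_spec[of T2] T by blast
      moreover have "T1 \<subset> par T1" using par_spec[of T1] T by blast
      ultimately show False using T by blast
    qed
    ultimately show False by blast
  qed
  have surj: "?Ch - {Cx x} \<subseteq> par ` (?Ch - {UNIV})"
  proof
    fix S assume S: "S \<in> ?Ch - {Cx x}"
    have "Cx x \<subseteq> S" using Cx_min S by blast
    then have "Cx x \<in> ?Ch \<and> Cx x \<subset> S" using S Cx_NN Cx_mem by blast
    then obtain T where T: "T \<in> ?Ch \<and> T \<subset> S"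
      and m: "\<And>T'. T' \<in> ?Ch \<and> T' \<subset> S \<Longrightarrow> CARD('n) - card T \<le> CARD('n) - card T'"
      using ex_has_least_nat[of "\<lambda>T. T \<in> ?Ch \<and> T \<subset> S" "Cx x" "\<lambda>T. CARD('n) - card T"] by blast
    have TU: "T \<noteq> UNIV" using T by blast
    have p: "par T \<in> NN" "T \<subset> par T" "par T \<subseteq> S" using par_spec[OF _ TU] T S by blast+
    have "par T = S"
    proof (rule ccontr)
      assume "par T \<noteq> S"
      then have "par T \<in> ?Ch \<and> par T \<subset> S" using p T by blast
      then have "CARD('n) - card T \<le> CARD('n) - card (par T)" using m by blast
      moreover have "card T < card (par T)" using p by (simp add: psubset_card_mono)
      moreover have "card (par T) \<le> CARD('n)" by (simp add: card_mono)
      ultimately show False by linarith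
    qed
    then show "S \<in> par ` (?Ch - {UNIV})" using T TU by blast
  qed
  show ?thesis unfolding bij_betw_def using img inj surj by blast
qed

lemma decomp:
  assumes c: "c \<in> KK B c0"
  shows "c = (\<Sum>T\<in>NN - {UNIV}. (mx c (par T) - mx c T) *\<^sub>R (- ind T)) + mx c UNIV *\<^sub>R ones"
proof (subst vec_eq_iff, rule allI)
  fix x
  let ?Ch = "{T\<in>NN. x \<in> T}"
  have fin: "finite ?Ch" by simp
  have seteq: "{T\<in>NN - {UNIV}. x \<in> T} = ?Ch - {UNIV}" by blast
  have "(\<Sum>T\<in>NN - {UNIV}. (mx c (par T) - mx c T) * - (if x \<in> T then 1 else 0))
      = - (\<Sum>T\<in>NN - {UNIV}. if x \<in> T then mx c (par T) - mx c T else 0)"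
    by (simp add: sum_negf[symmetric] if_distrib cong: if_cong)
  also have "(\<Sum>T\<in>NN - {UNIV}. if x \<in> T then mx c (par T) - mx c T else 0)
      = (\<Sum>T\<in>?Ch - {UNIV}. mx c (par T) - mx c T)"
    unfolding seteq[symmetric] by (rule sum.inter_filter[symmetric]) simp
  also have "\<dots> = (\<Sum>T\<in>?Ch - {UNIV}. mx c (par T)) - (\<Sum>T\<in>?Ch - {UNIV}. mx c T)"
    by (simp add: sum_subtractf)
  also have "(\<Sum>T\<in>?Ch - {UNIV}. mx c (par T)) = (\<Sum>T\<in>?Ch - {Cx x}. mx c T)"
    using sum.reindex_bij_betw[OF par_bij, of "mx c"] by simp
  also have "(\<Sum>T\<in>?Ch - {Cx x}. mx c T) = (\<Sum>T\<in>?Ch. mx c T) - mx c (Cx x)"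
    using Cx_NN Cx_mem by (subst sum_diff1) auto
  also have "(\<Sum>T\<in>?Ch - {UNIV}. mx c T) = (\<Sum>T\<in>?Ch. mx c T) - mx c UNIV"
    using univ_NN by (subst sum_diff1) auto
  finally have e1: "(\<Sum>T\<in>NN - {UNIV}. (mx c (par T) - mx c T) * - (if x \<in> T then 1 else 0))
      = - (mx c UNIV - mx c (Cx x))" by simp
  have "x \<in> Mx c0 (Cx x)"
    using Cx_comp Cx_mem unfolding comp_def Mx_def L_def by blast
  then have "x \<in> Mx c (Cx x)" using c Cx_NN NN_B unfolding KK_def by blast
  moreover have "Cx x \<noteq> {}" using Cx_mem[of x] by blast
  ultimately have e2: "mx c (Cx x) = c$x" using Mx_eq[of "Cx x" c] by auto
  show "c $ x = ((\<Sum>T\<in>NN - {UNIV}. (mx c (par T) - mx c T) *\<^sub>R - ind T) + mx c UNIV *\<^sub>R ones) $ x"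
    using e1 e2 by simp
qed

lemma par_mx: "T \<in> NN - {UNIV} \<Longrightarrow> mx c T \<le> mx c (par T)"
proof -
  assume T: "T \<in> NN - {UNIV}"
  then have sub: "T \<subset> par T" using par_spec by blast
  have "T \<noteq> {}" using NN_ne T by blast
  then obtain k where "k \<in> T" "c$k = mx c T" using mx_attained by blast
  then show ?thesis using mx_ge[of k "par T" c] sub by auto
qed

lemma indep:
  assumes z: "(\<Sum>T\<in>NN. a T *\<^sub>R ind T) = 0"
  shows "\<forall>T\<in>NN. a T = 0"
proof (rule ccontr)
  assume "\<not> (\<forall>T\<in>NN. a T = 0)"
  then obtain T0 where "T0 \<in> NN \<and> a T0 \<noteq> 0" by blast
  then obtain T where T: "T \<in> NN \<and> a T \<noteq> 0"
    and m: "\<And>T'. T' \<in> NN \<and> a T' \<noteq> 0 \<Longrightarrow> CARD('n) - card T \<le> CARD('n) - card T'"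
    using ex_has_least_nat[of "\<lambda>T. T \<in> NN \<and> a T \<noteq> 0" T0 "\<lambda>T. CARD('n) - card T"] by blast
  obtain x where x: "x \<in> T" "\<forall>T'\<in>NN. T' \<subset> T \<longrightarrow> x \<notin> T'" using top_elem T by blast
  have zero: "a T' * (if x \<in> T' then 1 else 0) = 0" if T': "T' \<in> NN - {T}" for T'
  proof (rule ccontr)
    assume nz: "a T' * (if x \<in> T' then 1 else 0) \<noteq> 0"
    then have xT': "x \<in> T'" and aT': "a T' \<noteq> 0" by (auto split: if_splits)
    have "T' \<subseteq> T \<or> T \<subseteq> T'" using lam2[of T' T] T' T xT' x by blast
    moreover have "\<not> T' \<subset> T" using x T' xT' by blast
    moreover have "\<not> T \<subset> T'"
    proof
      assume "T \<subset> T'"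
      then have "card T < card T'" by (simp add: psubset_card_mono)
      moreover have "card T' \<le> CARD('n)" by (simp add: card_mono)
      moreover have "CARD('n) - card T \<le> CARD('n) - card T'" using m T' aT' by blast
      ultimately show False by linarith
    qed
    ultimately show False using T' by blast
  qed
  have "0 = (\<Sum>T'\<in>NN. a T' * (if x \<in> T' then 1 else 0))"
    using arg_cong[OF z, of "\<lambda>v. v $ x"] by simp
  also have "\<dots> = a T * (if x \<in> T then 1 else 0) + (\<Sum>T'\<in>NN - {T}. a T' * (if x \<in> T' then 1 else 0))"
    using T by (subst sum.remove) auto
  also have "(\<Sum>T'\<in>NN - {T}. a T' * (if x \<in> T' then 1 else 0)) = 0"
    by (rule sum.neutral) (use zero in blast)
  also have "a T * (if x \<in> T then 1 else 0) + 0 = a T" using x by simp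
  finally show False using T by simp
qed

lemma simplicial: "simplicial_mod_ones (KK B c0)"
proof -
  let ?N = "NN - {UNIV}"
  let ?V = "(\<lambda>T. - ind T) ` ?N"
  have finV: "finite ?V" by simp
  have onesV: "ones \<notin> ?V"
  proof
    assume "ones \<in> ?V"
    then obtain T where "ones = - ind T" "T \<in> NN - {UNIV}" by (rule imageE)
    then have "ones $ undefined = (- ind T) $ undefined" by simp
    then show False by (simp split: if_splits)
  qed
  define phi where "phi T = (if T = UNIV then ones else - ind T)" for T :: "'n set"
  have phiimg: "insert ones ?V = phi ` NN"
    unfolding phi_def using univ_NN by auto
  have phiinj: "inj_on phi NN"
  proof (rule inj_onI)
    fix S T assume ST: "S \<in> NN" "T \<in> NN" "phi S = phi T"
    have nz: "ones \<noteq> - ind X" for X :: "'n set"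
    proof -
      have "ones $ undefined \<noteq> (- ind X) $ undefined" by simp
      then show ?thesis by metis
    qed
    show "S = T"
    proof (cases "S = UNIV"; cases "T = UNIV")
      assume "S \<noteq> UNIV" "T \<noteq> UNIV"
      then have "- ind S = - ind T" using ST unfolding phi_def by simp
      then show "S = T" using nind_inj[of UNIV] unfolding inj_on_def by blast
    qed (use ST nz nz[symmetric] in \<open>auto simp: phi_def\<close>)
  qed
  have indepV: "independent (insert ones ?V)"
  proof
    assume "dependent (insert ones ?V)"
    then obtain u where u: "\<exists>v\<in>insert ones ?V. u v \<noteq> 0" "(\<Sum>v\<in>insert ones ?V. u v *\<^sub>R v) = 0"
      using real_vector.dependent_finite[of "insert ones ?V"] by auto
    define a where "a T = (if T = UNIV then u ones else - u (phi T))" for T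
    have "(\<Sum>v\<in>insert ones ?V. u v *\<^sub>R v) = (\<Sum>T\<in>NN. u (phi T) *\<^sub>R phi T)"
      unfolding phiimg using phiinj by (simp add: sum.reindex)
    also have "\<dots> = (\<Sum>T\<in>NN. a T *\<^sub>R ind T)"
      by (intro sum.cong) (auto simp: a_def phi_def ind_UNIV)
    finally have "(\<Sum>T\<in>NN. a T *\<^sub>R ind T) = 0" using u by simp
    then have "\<forall>T\<in>NN. a T = 0" by (rule indep)
    then have "\<forall>T\<in>NN. u (phi T) = 0" unfolding a_def phi_def by (auto split: if_splits)
    then show False using u phiimg by auto
  qed
  have coneq: "KK B c0 = {(\<Sum>v\<in>?V. a v *\<^sub>R v) + t *\<^sub>R ones | a t. \<forall>v\<in>?V. a v \<ge> 0}"
  proof (intro set_eqI iffI)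
    fix c assume c: "c \<in> KK B c0"
    define aT where "aT T = mx c (par T) - mx c T" for T
    define a where "a v = aT (inv_into ?N (\<lambda>T. - ind T) v)" for v
    have invN: "a (- ind T) = aT T" if "T \<in> ?N" for T
      unfolding a_def using inv_into_f_f[OF nind_inj[of ?N] that] by simp
    have "(\<Sum>v\<in>?V. a v *\<^sub>R v) = (\<Sum>T\<in>?N. a (- ind T) *\<^sub>R (- ind T))"
      using nind_inj[of ?N] by (simp add: sum.reindex)
    also have "\<dots> = (\<Sum>T\<in>?N. aT T *\<^sub>R (- ind T))"
      by (rule sum.cong[OF refl]) (simp add: invN)
    finally have e: "c = (\<Sum>v\<in>?V. a v *\<^sub>R v) + mx c UNIV *\<^sub>R ones"
      using decomp[OF c] unfolding aT_def by simp
    have "\<forall>v\<in>?V. a v \<ge> 0"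
    proof
      fix v assume "v \<in> ?V"
      then obtain T where T: "T \<in> ?N" "v = - ind T" by (rule imageE)
      then show "a v \<ge> 0" using invN[OF T(1)] par_mx[OF T(1), of c] unfolding aT_def by simp
    qed
    then show "c \<in> {(\<Sum>v\<in>?V. a v *\<^sub>R v) + t *\<^sub>R ones | a t. \<forall>v\<in>?V. a v \<ge> 0}"
      using e by blast
  next
    fix c assume "c \<in> {(\<Sum>v\<in>?V. a v *\<^sub>R v) + t *\<^sub>R ones | a t. \<forall>v\<in>?V. a v \<ge> 0}"
    then obtain a t where at: "c = (\<Sum>v\<in>?V. a v *\<^sub>R v) + t *\<^sub>R ones" "\<forall>v\<in>?V. a v \<ge> 0" by blast
    have "(\<Sum>v\<in>?V. a v *\<^sub>R v) = (\<Sum>T\<in>?N. a (- ind T) *\<^sub>R (- ind T))"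
      using nind_inj[of ?N] by (simp add: sum.reindex)
    moreover have "\<forall>T\<in>?N. 0 \<le> a (- ind T)" using at by blast
    ultimately show "c \<in> KK B c0" using cone_sub[of "\<lambda>T. a (- ind T)" t] at by simp
  qed
  show ?thesis unfolding simplicial_mod_ones_def
    using finV onesV indepV coneq by blast
qed

end

lemma bc_ne:
  assumes "\<forall>F\<in>\<F>. F \<noteq> {}"
  shows "\<forall>S\<in>building_closure \<F>. S \<noteq> {}"
proof
  fix S assume "S \<in> building_closure \<F>"
  then show "S \<noteq> {}" by induction (use assms in auto)
qed

lemma is_fan_KK:
  assumes ne: "\<forall>S\<in>B. S \<noteq> {}"
  shows "is_fan (range (KK B))"
  unfolding is_fan_def
proof (intro conjI)
  show "\<forall>C\<in>range (KK B). convex C \<and> cone C \<and> closed C"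
    using KK_convex KK_cone KK_closed by blast
  show "\<forall>C\<in>range (KK B). \<forall>D. D face_of C \<and> D \<noteq> {} \<longrightarrow> D \<in> range (KK B)"
    using face_KK[OF ne] by blast
  show "\<forall>C\<in>range (KK B). \<forall>D\<in>range (KK B). C \<inter> D face_of C \<and> C \<inter> D face_of D"
  proof (intro ballI conjI)
    fix C D assume "C \<in> range (KK B)" "D \<in> range (KK B)"
    then obtain c0 c1 where "C = KK B c0" "D = KK B c1" by blast
    then show "C \<inter> D face_of C" "C \<inter> D face_of D"
      using KK_inter_face[OF ne, of c0 c1] KK_inter_face[OF ne, of c1 c0] by (auto simp: Int_commute)
  qed
qed

lemma support_KK: "fan_support (range (KK B)) = UNIV"
  unfolding fan_support_def using K_self by blast

theorem corollary3p15:
  fixes \<F> :: "'n::finite set set"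
  assumes "\<forall>F\<in>\<F>. F \<noteq> {}"
    and "(UNIV :: 'n set) \<in> building_closure \<F>"
  shows "simplicial_fan (normal_fan (minkowski_family (building_closure \<F>))) \<and>
         refines (normal_fan (minkowski_family (building_closure \<F>)))
                 (normal_fan (minkowski_family \<F>)) \<and>
         fan_support (normal_fan (minkowski_family (building_closure \<F>))) = UNIV \<and>
         fan_support (normal_fan (minkowski_family \<F>)) = UNIV"
proof -
  let ?B = "building_closure \<F>"
  have neB: "\<forall>S\<in>?B. S \<noteq> {}" using bc_ne[OF assms(1)] .
  have nfB: "normal_fan (minkowski_family ?B) = range (KK ?B)" using normal_fan_eq[OF neB] .
  have nfF: "normal_fan (minkowski_family \<F>) = range (KK \<F>)" using normal_fan_eq[OF assms(1)] .
  have bs: "bset ?B"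
  proof
    show "\<forall>S\<in>?B. S \<noteq> {}" using neB .
    show "UNIV \<in> ?B" using assms(2) .
    show "\<And>S T. S \<in> ?B \<Longrightarrow> T \<in> ?B \<Longrightarrow> S \<inter> T \<noteq> {} \<Longrightarrow> S \<union> T \<in> ?B"
      by (rule building_closure.union)
    show "\<And>i. {i} \<in> ?B" by (rule building_closure.singleton)
  qed
  have sf: "simplicial_fan (range (KK ?B))"
    unfolding simplicial_fan_def using is_fan_KK[OF neB] bset.simplicial[OF bs] by blast
  have "KK ?B c0 \<subseteq> KK \<F> c0" for c0
    unfolding KK_def using building_closure.base[of _ \<F>] by blast
  then have rf: "refines (range (KK ?B)) (range (KK \<F>))"
    unfolding refines_def by blast
  have s1: "fan_support (range (KK ?B)) = UNIV" by (rule support_KK)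
  have s2: "fan_support (range (KK \<F>)) = UNIV" by (rule support_KK)
  show ?thesis unfolding nfB nfF using sf rf s1 s2 by blast
qed

end
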